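(* Let $p\in\mathbb N$ and let $f_1,\dots,f_p$ be infinitely differentiable functions of $t$. Define $g_{i+pn}=f^{(n)}_i$ for $i=1,\dots,p$, $n=0,1,2,\dots$, and $$f_{k+(p+1)m}=W(g_k,\dots,g_{k+m}),\qquad k=1,\dots,p+1,\ m=0,1,2,\dots$$ (this is consistent with the given $f_1,\dots,f_p$ for $m=0$), and set $f_{-p}=\dots=f_0=1$. Then the functions $f_j$, $j\ge -p$, satisfy $$f_{j-1}f'_j-f'_{j-1}f_j=f_{j-p-1}f_{j+p},\qquad j=1,2,\dots.$$
   Context: $W(y_0,\dots,y_m)=\det\bigl(y^{(i)}_j\bigr)_{i,j=0}^m$ denotes the Wronskian; $f^{(n)}$ is the $n$-th derivative with respect to $t$. *)

theory Defs
  imports "HOL-Analysis.Analysis" "Jordan_Normal_Form.Determinant"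
begin

definition nderiv :: "nat \<Rightarrow> (real \<Rightarrow> real) \<Rightarrow> (real \<Rightarrow> real)" where
  "nderiv n y = (deriv ^^ n) y"

definition smooth :: "(real \<Rightarrow> real) \<Rightarrow> bool" where
  "smooth y \<longleftrightarrow> (\<forall>n x. nderiv n y differentiable (at x))"

definition wronskian :: "nat \<Rightarrow> (nat \<Rightarrow> real \<Rightarrow> real) \<Rightarrow> real \<Rightarrow> real" where
  "wronskian m y t = det (mat (Suc m) (Suc m) (\<lambda>(i, j). nderiv i (y j) t))"

text \<open>g_{i+pn} = f_i^{(n)}, i = 1..p, n \<ge> 0; for index j \<ge> 1:
  i = (j-1) mod p + 1, n = (j-1) div p.\<close>
definition gseq :: "nat \<Rightarrow> (nat \<Rightarrow> real \<Rightarrow> real) \<Rightarrow> nat \<Rightarrow> real \<Rightarrow> real" where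
  "gseq p f j = nderiv ((j - 1) div p) (f ((j - 1) mod p + 1))"

text \<open>f_{k+(p+1)m} = W(g_k,...,g_{k+m}), k = 1..p+1, m \<ge> 0; f_j = 1 for -p \<le> j \<le> 0.
  (Values for j < -p are irrelevant and set to 1 as well.)\<close>
definition fseq :: "nat \<Rightarrow> (nat \<Rightarrow> real \<Rightarrow> real) \<Rightarrow> int \<Rightarrow> real \<Rightarrow> real" where
  "fseq p f j = (if j \<le> 0 then (\<lambda>_. 1) else
     (let k = nat ((j - 1) mod (int p + 1)) + 1;
          m = nat ((j - 1) div (int p + 1))
      in wronskian m (\<lambda>l. gseq p f (k + l))))"

end

theory Submission imports Defs "Jordan_Normal_Form.Char_Poly" begin

definition Wm :: "nat \<Rightarrow> (nat \<Rightarrow> real \<Rightarrow> real) \<Rightarrow> real \<Rightarrow> real" where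
  "Wm n y t = det (mat n n (\<lambda>(i,j). nderiv i (y j) t))"

lemma det_2x2:
  fixes Y :: "'a::comm_ring_1 mat"
  assumes Y: "Y \<in> carrier_mat 2 2"
  shows "det Y = Y $$ (0,0) * Y $$ (1,1) - Y $$ (0,1) * Y $$ (1,0)"
proof -
  have "det Y = (\<Sum>i<2. Y $$ (i,0) * cofactor Y i 0)"
    by (rule laplace_expansion_column[OF Y], simp)
  also have "\<dots> = Y $$ (0,0) * cofactor Y 0 0 + Y $$ (1,0) * cofactor Y 1 0"
    by (simp add: numeral_2_eq_2)
  also have "cofactor Y 0 0 = Y $$ (1,1)"
    unfolding cofactor_def using Y by (subst det_single, auto simp: mat_delete_def)
  also have "cofactor Y 1 0 = - Y $$ (0,1)"
    unfolding cofactor_def using Y by (subst det_single, auto simp: mat_delete_def)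
  finally show ?thesis by (simp add: algebra_simps)
qed

lemma DJ_nz:
  fixes M :: "'a::idom mat"
  assumes M: "M \<in> carrier_mat (n+2) (n+2)" and nz: "det M \<noteq> 0"
  shows "det M * det (mat_delete (mat_delete M (n+1) (n+1)) n n) =
    det (mat_delete M n n) * det (mat_delete M (n+1) (n+1)) - det (mat_delete M n (n+1)) * det (mat_delete M (n+1) n)"
proof -
  define N where "N = n + 2"
  define Adj where "Adj = adj_mat M"
  have MN: "M \<in> carrier_mat N N" using M N_def by simp
  have Adj: "Adj \<in> carrier_mat N N" "M * Adj = det M \<cdot>\<^sub>m 1\<^sub>m N"
    using adj_mat[OF MN] Adj_def by auto
  define X where "X = mat N N (\<lambda>(i,j). if j < n then (if i = j then 1 else 0) else Adj $$ (i,j))"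
  define P where "P = mat n n (\<lambda>(i,j). M $$ (i,j))"
  define Q where "Q = mat 2 n (\<lambda>(i,j). M $$ (n+i, j))"
  define Y1 where "Y1 = mat n 2 (\<lambda>(i,j). Adj $$ (i, n+j))"
  define Y2 where "Y2 = mat 2 2 (\<lambda>(i,j). Adj $$ (n+i, n+j))"
  have X: "X \<in> carrier_mat N N" unfolding X_def by simp
  have entry: "(M * X) $$ (i,j) = (if j < n then M $$ (i,j) else det M * (if i = j then 1 else 0))"
    if ij: "i < N" "j < N" for i j
  proof (cases "j < n")
    case True
    have "(M * X) $$ (i,j) = (\<Sum>k\<in>{0..<N}. M $$ (i,k) * (if k = j then 1 else 0))"
      using ij MN True unfolding X_def by (simp add: scalar_prod_def)
    also have "\<dots> = M $$ (i,j)" using True N_def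
      by (simp add: if_distrib[of "\<lambda>x. _ * x"] sum.delta cong: if_cong)
    finally show ?thesis using True by simp
  next
    case False
    have "(M * X) $$ (i,j) = (\<Sum>k\<in>{0..<N}. M $$ (i,k) * Adj $$ (k,j))"
      using ij MN False unfolding X_def by (simp add: scalar_prod_def)
    also have "\<dots> = (M * Adj) $$ (i,j)"
      using ij MN Adj(1) by (simp add: scalar_prod_def)
    also have "\<dots> = det M * (if i = j then 1 else 0)" using Adj ij by simp
    finally show ?thesis using False by simp
  qed
  have MX: "M * X = four_block_mat P (0\<^sub>m n 2) Q (det M \<cdot>\<^sub>m 1\<^sub>m 2)"
    apply (rule eq_matI)
    using MN X entry unfolding four_block_mat_def P_def Q_def N_def
    by (auto simp: Let_def)
  have XB: "X = four_block_mat (1\<^sub>m n) Y1 (0\<^sub>m 2 n) Y2"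
    apply (rule eq_matI)
    unfolding four_block_mat_def X_def Y1_def Y2_def N_def
    by (auto simp: Let_def)
  have "det (M * X) = det M * det X" by (rule det_mult[OF MN X])
  also have "det X = det Y2" unfolding XB
    by (subst det_four_block_mat_lower_left_zero[of _ n _ 2], auto simp: Y1_def Y2_def)
  finally have e1: "det (M * X) = det M * det Y2" .
  have "det (M * X) = det P * det (det M \<cdot>\<^sub>m 1\<^sub>m 2)" unfolding MX
    by (rule det_four_block_mat_upper_right_zero[of _ n _ 2], auto simp: P_def Q_def)
  also have "\<dots> = det P * (det M * det M)" by (simp add: power2_eq_square)
  finally have "det M * det Y2 = det M * (det P * det M)" using e1 by (simp add: ac_simps)
  with nz have Y2P: "det Y2 = det P * det M" by simp
  have "det Y2 = Adj $$ (n,n) * Adj $$ (n+1,n+1) - Adj $$ (n,n+1) * Adj $$ (n+1,n)"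
    by (subst det_2x2, auto simp: Y2_def)
  also have "\<dots> = det (mat_delete M n n) * det (mat_delete M (n+1) (n+1)) - det (mat_delete M n (n+1)) * det (mat_delete M (n+1) n)"
    using MN unfolding Adj_def adj_mat_def cofactor_def N_def by simp
  finally have "det Y2 = det (mat_delete M n n) * det (mat_delete M (n+1) (n+1)) - det (mat_delete M n (n+1)) * det (mat_delete M (n+1) n)" .
  moreover have "P = mat_delete (mat_delete M (n+1) (n+1)) n n"
    apply (rule eq_matI) using M unfolding P_def mat_delete_def by auto
  ultimately show ?thesis using Y2P by (simp add: ac_simps)
qed

lemma poly_det0:
  fixes A :: "'a::comm_ring_1 poly mat"
  assumes A: "A \<in> carrier_mat n n"
  shows "poly (det A) 0 = det (map_mat (\<lambda>p. poly p 0) A)"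
  apply (subst (1 2) det_def', use A in force, use A in force)
  unfolding poly_sum poly_mult poly_prod using A
  by (intro sum.cong[OF refl] arg_cong2[of _ _ _ _ "(*)"] prod.cong[OF refl], auto simp: sign_def)

lemma map_mat_delete:
  "map_mat g (mat_delete A i j) = mat_delete (map_mat g A) i j"
  by (rule eq_matI, auto simp: mat_delete_def)

lemma DJ:
  fixes M :: "'a::idom mat"
  assumes M: "M \<in> carrier_mat (n+2) (n+2)"
  shows "det M * det (mat_delete (mat_delete M (n+1) (n+1)) n n) =
    det (mat_delete M n n) * det (mat_delete M (n+1) (n+1)) - det (mat_delete M n (n+1)) * det (mat_delete M (n+1) n)"
proof -
  define L where "L = char_poly_matrix (-M)"
  define ev where "ev = map_mat (\<lambda>p::'a poly. poly p 0)"
  have mM: "-M \<in> carrier_mat (n+2) (n+2)" using M by simp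
  have L: "L \<in> carrier_mat (n+2) (n+2)" unfolding L_def using mM by simp
  have "det L = char_poly (-M)" unfolding L_def char_poly_def ..
  moreover have "coeff (char_poly (-M)) (n+2) = 1" using degree_monic_char_poly[OF mM] by simp
  ultimately have nz: "det L \<noteq> 0" by auto
  have evL: "ev L = M"
    apply (rule eq_matI) using M unfolding ev_def L_def char_poly_matrix_def by auto
  have pd: "poly (det B) 0 = det (ev B)" if "B \<in> carrier_mat k k" for B k
    unfolding ev_def by (rule poly_det0[OF that])
  have dims: "mat_delete L n n \<in> carrier_mat (n+1) (n+1)" "mat_delete L (n+1) (n+1) \<in> carrier_mat (n+1) (n+1)"
     "mat_delete L n (n+1) \<in> carrier_mat (n+1) (n+1)" "mat_delete L (n+1) n \<in> carrier_mat (n+1) (n+1)"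
     "mat_delete (mat_delete L (n+1) (n+1)) n n \<in> carrier_mat n n"
    using L by (auto simp: mat_delete_def)
  from arg_cong[OF DJ_nz[OF L nz], of "\<lambda>p. poly p 0"]
  show ?thesis
    unfolding poly_mult poly_diff pd[OF L] pd[OF dims(1)] pd[OF dims(2)] pd[OF dims(3)] pd[OF dims(4)] pd[OF dims(5)]
    unfolding ev_def map_mat_delete unfolding ev_def[symmetric] evL .
qed


lemma nderiv_Suc: "nderiv (Suc i) y = deriv (nderiv i y)" by (simp add: nderiv_def)
lemma nderiv_Suc': "nderiv (Suc i) y = nderiv i (deriv y)" by (simp only: nderiv_def funpow_Suc_right o_apply)
lemma nderiv_add: "nderiv i (nderiv j y) = nderiv (i+j) y" by (simp add: nderiv_def funpow_add)
lemma nderiv_0[simp]: "nderiv 0 y = y" by (simp add: nderiv_def)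
lemma nderiv_const: "nderiv i (\<lambda>_. c) = (if i = 0 then (\<lambda>_. c) else (\<lambda>_. 0))"
  by (induction i) (auto simp: nderiv_Suc)

lemma det_fun_def:
  "det (mat n n (\<lambda>(i,j). B i j)) = (\<Sum>p\<in>{p. p permutes {0..<n}}. signof p * (\<Prod>i=0..<n. B i (p i)))"
  by (subst det_def'[of _ n], simp, intro sum.cong refl arg_cong2[of _ _ _ _ "(*)"] prod.cong,
      auto simp: permutes_in_image)

lemma det_deriv:
  fixes A :: "nat \<Rightarrow> nat \<Rightarrow> real \<Rightarrow> real" and A' :: "nat \<Rightarrow> nat \<Rightarrow> real"
  assumes d: "\<And>i j. i < n \<Longrightarrow> j < n \<Longrightarrow> (A i j has_real_derivative A' i j) (at t)"
  shows "((\<lambda>x. det (mat n n (\<lambda>(i,j). A i j x))) has_real_derivative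
     (\<Sum>k<n. det (mat n n (\<lambda>(i,j). if i = k then A' i j else A i j t)))) (at t)"
proof -
  let ?P = "{p. p permutes {0..<n}}"
  have eq: "(\<lambda>x. det (mat n n (\<lambda>(i,j). A i j x))) = (\<lambda>x. \<Sum>p\<in>?P. signof p * (\<Prod>i=0..<n. A i (p i) x))"
    by (rule ext, rule det_fun_def)
  have D: "((\<lambda>x. \<Sum>p\<in>?P. signof p * (\<Prod>i=0..<n. A i (p i) x)) has_real_derivative
     (\<Sum>p\<in>?P. signof p * (\<Sum>k\<in>{0..<n}. A' k (p k) * (\<Prod>i\<in>{0..<n}-{k}. A i (p i) t)))) (at t)"
    apply (rule DERIV_sum)
    apply (rule DERIV_cmult)
    apply (rule has_field_derivative_prod)
    using d by (auto simp: permutes_in_image)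
  have "(\<Sum>p\<in>?P. signof p * (\<Sum>k\<in>{0..<n}. A' k (p k) * (\<Prod>i\<in>{0..<n}-{k}. A i (p i) t)))
      = (\<Sum>k\<in>{0..<n}. \<Sum>p\<in>?P. signof p * (\<Prod>i=0..<n. (if i = k then A' i (p i) else A i (p i) t)))"
    unfolding sum_distrib_left
    apply (subst sum.swap)
    apply (intro sum.cong refl)
    subgoal for k p
    proof -
      assume k: "k \<in> {0..<n}"
      have "(\<Prod>i=0..<n. (if i = k then A' i (p i) else A i (p i) t))
          = A' k (p k) * (\<Prod>i\<in>{0..<n}-{k}. (if i = k then A' i (p i) else A i (p i) t))"
        using k by (subst prod.remove[of "{0..<n}" k], auto)
      also have "(\<Prod>i\<in>{0..<n}-{k}. (if i = k then A' i (p i) else A i (p i) t)) = (\<Prod>i\<in>{0..<n}-{k}. A i (p i) t)"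
        by (rule prod.cong, auto)
      finally show ?thesis by simp
    qed
    done
  also have "\<dots> = (\<Sum>k<n. det (mat n n (\<lambda>(i,j). if i = k then A' i j else A i j t)))"
    by (subst det_fun_def, simp add: atLeast0LessThan)
  finally show ?thesis using D eq by simp
qed

lemma nderiv_has_deriv:
  assumes "nderiv i g differentiable (at t)"
  shows "(nderiv i g has_real_derivative nderiv (Suc i) g t) (at t)"
  using assms DERIV_deriv_iff_real_differentiable nderiv_Suc by metis

lemma Wm_deriv:
  assumes d: "\<And>i j x. j < Suc m \<Longrightarrow> nderiv i (y j) differentiable (at x)"
  shows "(Wm (Suc m) y has_real_derivative
     det (mat (Suc m) (Suc m) (\<lambda>(i,j). nderiv (if i = m then Suc m else i) (y j) t))) (at t)"
proof -
  have D: "((\<lambda>x. det (mat (Suc m) (Suc m) (\<lambda>(i,j). nderiv i (y j) x))) has_real_derivative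
     (\<Sum>k<Suc m. det (mat (Suc m) (Suc m) (\<lambda>(i,j). if i = k then nderiv (Suc i) (y j) t else nderiv i (y j) t)))) (at t)"
    by (rule det_deriv, rule nderiv_has_deriv, rule d)
  have z: "det (mat (Suc m) (Suc m) (\<lambda>(i,j). if i = k then nderiv (Suc i) (y j) t else nderiv i (y j) t)) = 0"
    if k: "k < m" for k
    by (rule det_identical_rows[of _ "Suc m" k "Suc k"], insert k, auto intro!: eq_vecI)
  have "(\<Sum>k<Suc m. det (mat (Suc m) (Suc m) (\<lambda>(i,j). if i = k then nderiv (Suc i) (y j) t else nderiv i (y j) t)))
     = det (mat (Suc m) (Suc m) (\<lambda>(i,j). nderiv (if i = m then Suc m else i) (y j) t))"
    apply (subst sum.lessThan_Suc)
    apply (subst sum.neutral, use z in force)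
    by (simp, intro arg_cong[of _ _ det] eq_matI, auto)
  with D show ?thesis unfolding Wm_def[abs_def] by simp
qed


lemma Jacobi_last:
  fixes z :: "nat \<Rightarrow> real \<Rightarrow> real"
  assumes d: "\<And>i j x. nderiv i (z j) differentiable (at x)"
  shows "Wm (n+1) z t * deriv (Wm (n+1) (z(n := z (n+1)))) t
       - deriv (Wm (n+1) z) t * Wm (n+1) (z(n := z (n+1))) t = Wm n z t * Wm (n+2) z t"
proof -
  define z' where "z' = z(n := z (n+1))"
  define M where "M = mat (n+2) (n+2) (\<lambda>(i,j). nderiv i (z j) t)"
  have M: "M \<in> carrier_mat (n+2) (n+2)" unfolding M_def by simp
  have d': "nderiv i (z' j) differentiable (at x)" for i j x unfolding z'_def using d by simp
  have e1: "mat_delete M (n+1) (n+1) = mat (n+1) (n+1) (\<lambda>(i,j). nderiv i (z j) t)"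
    by (rule eq_matI, auto simp: M_def mat_delete_def)
  have e2: "mat_delete (mat_delete M (n+1) (n+1)) n n = mat n n (\<lambda>(i,j). nderiv i (z j) t)"
    unfolding e1 by (rule eq_matI, auto simp: mat_delete_def)
  have e3: "mat_delete M (n+1) n = mat (n+1) (n+1) (\<lambda>(i,j). nderiv i (z' j) t)"
    by (rule eq_matI, auto simp: M_def mat_delete_def z'_def)
  have e4: "mat_delete M n n = mat (Suc n) (Suc n) (\<lambda>(i,j). nderiv (if i = n then Suc n else i) (z' j) t)"
    by (rule eq_matI, auto simp: M_def mat_delete_def z'_def)
  have e5: "mat_delete M n (n+1) = mat (Suc n) (Suc n) (\<lambda>(i,j). nderiv (if i = n then Suc n else i) (z j) t)"
    by (rule eq_matI, auto simp: M_def mat_delete_def)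
  have D1: "deriv (Wm (Suc n) z') t = det (mat (Suc n) (Suc n) (\<lambda>(i,j). nderiv (if i = n then Suc n else i) (z' j) t))"
    by (rule DERIV_imp_deriv, rule Wm_deriv, rule d')
  have D2: "deriv (Wm (Suc n) z) t = det (mat (Suc n) (Suc n) (\<lambda>(i,j). nderiv (if i = n then Suc n else i) (z j) t))"
    by (rule DERIV_imp_deriv, rule Wm_deriv, rule d)
  have fM: "det M = Wm (n+2) z t" unfolding M_def Wm_def ..
  have f1: "det (mat_delete M (n+1) (n+1)) = Wm (n+1) z t" unfolding e1 Wm_def ..
  have f2: "det (mat_delete (mat_delete M (n+1) (n+1)) n n) = Wm n z t" unfolding e2 Wm_def ..
  have f3: "det (mat_delete M (n+1) n) = Wm (n+1) z' t" unfolding e3 Wm_def ..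
  have f4: "det (mat_delete M n n) = deriv (Wm (n+1) z') t" unfolding e4 using D1 by simp
  have f5: "det (mat_delete M n (n+1)) = deriv (Wm (n+1) z) t" unfolding e5 using D2 by simp
  have "Wm (n+2) z t * Wm n z t = deriv (Wm (n+1) z') t * Wm (n+1) z t - deriv (Wm (n+1) z) t * Wm (n+1) z' t"
    using DJ[OF M] unfolding fM f1 f2 f3 f4 f5 .
  then show ?thesis unfolding z'_def[symmetric] by (simp add: ac_simps)
qed


lemma Wm_cong: "(\<And>j. j < n \<Longrightarrow> y j = y' j) \<Longrightarrow> Wm n y = Wm n y'"
  unfolding Wm_def by (intro ext arg_cong[of _ _ det] eq_matI, auto)

lemma Wm_rot:
  assumes "n + 1 \<le> N"
  shows "Wm N (\<lambda>l. y (if l < n then l+1 else if l < n+1 then 0 else l)) t = (-1)^n * Wm N y t"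
proof -
  define A where "A = mat N N (\<lambda>(i,j). nderiv i (y j) t)"
  have A: "A \<in> carrier_mat N N" unfolding A_def by simp
  have "det A = (- 1) ^ (1 * n) *
    det (mat N N (\<lambda>(i, j). A $$ (i, if j < n then j + 1 else if j < 1 + n then j - n else j)))"
    by (rule det_swap_initial_cols[OF A], use assms in simp)
  also have "mat N N (\<lambda>(i, j). A $$ (i, if j < n then j + 1 else if j < 1 + n then j - n else j))
    = mat N N (\<lambda>(i,j). nderiv i (y (if j < n then j+1 else if j < n+1 then 0 else j)) t)"
    using assms by (intro eq_matI, auto simp: A_def)
  finally have "Wm N y t = (-1)^n * Wm N (\<lambda>l. y (if l < n then l+1 else if l < n+1 then 0 else l)) t"
    unfolding Wm_def A_def by simp
  then show ?thesis by (simp add: power_mult_distrib[symmetric] flip: power_mult)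
qed

lemma Jacobi_front:
  fixes y :: "nat \<Rightarrow> real \<Rightarrow> real"
  assumes d: "\<And>i j x. nderiv i (y j) differentiable (at x)"
  shows "Wm (n+1) y t * deriv (Wm (n+1) (\<lambda>l. y (l+1))) t - deriv (Wm (n+1) y) t * Wm (n+1) (\<lambda>l. y (l+1)) t
       = Wm n (\<lambda>l. y (l+1)) t * Wm (n+2) y t"
proof -
  define z where "z = (\<lambda>l. y (if l < n then l+1 else if l < n+1 then 0 else l))"
  have dz: "nderiv i (z j) differentiable (at x)" for i j x unfolding z_def using d by simp
  have J: "Wm (n+1) z t * deriv (Wm (n+1) (z(n := z (n+1)))) t
       - deriv (Wm (n+1) z) t * Wm (n+1) (z(n := z (n+1))) t = Wm n z t * Wm (n+2) z t"
    by (rule Jacobi_last[OF dz])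
  have r1: "Wm (n+1) z = (\<lambda>t. (-1)^n * Wm (n+1) y t)"
    unfolding z_def by (rule ext, rule Wm_rot, simp)
  have r2: "Wm (n+2) z t = (-1)^n * Wm (n+2) y t"
    unfolding z_def by (rule Wm_rot, simp)
  have r3: "Wm (n+1) (z(n := z (n+1))) = Wm (n+1) (\<lambda>l. y (l+1))"
    by (rule Wm_cong, auto simp: z_def)
  have r4: "Wm n z = Wm n (\<lambda>l. y (l+1))"
    by (rule Wm_cong, auto simp: z_def)
  obtain Dv where Dv: "(Wm (Suc n) y has_real_derivative Dv) (at t)"
    using Wm_deriv[of n y, OF d] by blast
  have r5: "deriv (Wm (n+1) z) t = (-1)^n * deriv (Wm (n+1) y) t"
    unfolding r1 using DERIV_imp_deriv[OF DERIV_cmult[OF Dv, of "(-1)^n"]] DERIV_imp_deriv[OF Dv] by simp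
  have "(-1)^n * (Wm (n+1) y t * deriv (Wm (n+1) (\<lambda>l. y (l+1))) t - deriv (Wm (n+1) y) t * Wm (n+1) (\<lambda>l. y (l+1)) t)
      = (-1)^n * (Wm n (\<lambda>l. y (l+1)) t * Wm (n+2) y t)"
    using J unfolding r5 r3 r4 r2 unfolding r1 by (simp add: algebra_simps)
  then show ?thesis by simp
qed

lemma Wm_const_front:
  assumes y0: "y 0 = (\<lambda>_. 1)"
  shows "Wm (Suc n) y t = Wm n (\<lambda>l. deriv (y (Suc l))) t"
proof -
  define M where "M = mat (Suc n) (Suc n) (\<lambda>(i,j). nderiv i (y j) t)"
  have M: "M \<in> carrier_mat (Suc n) (Suc n)" unfolding M_def by simp
  have "det M = (\<Sum>i<Suc n. M $$ (i,0) * cofactor M i 0)"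
    by (rule laplace_expansion_column[OF M], simp)
  also have "\<dots> = (\<Sum>i<Suc n. (if i = 0 then cofactor M 0 0 else 0))"
    by (rule sum.cong, auto simp: M_def y0 nderiv_const)
  also have "\<dots> = cofactor M 0 0" by simp
  also have "\<dots> = det (mat_delete M 0 0)" by (simp add: cofactor_def)
  also have "mat_delete M 0 0 = mat n n (\<lambda>(i,j). nderiv i (deriv (y (Suc j))) t)"
    by (rule eq_matI, auto simp: M_def mat_delete_def nderiv_Suc')
  finally show ?thesis unfolding Wm_def M_def .
qed


lemma fseq_le0: "J \<le> 0 \<Longrightarrow> fseq p f J = (\<lambda>_. 1)"
  unfolding fseq_def by simp

lemma Wm_0: "Wm 0 y t = 1"
  unfolding Wm_def by simp

lemma fseq_eq:
  assumes J: "J = int k + (int p + 1) * int m" and k: "1 \<le> k" "k \<le> p + 1"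
  shows "fseq p f J = Wm (Suc m) (\<lambda>l. gseq p f (k+l))"
proof -
  have J1: "J - 1 = (int k - 1) + int m * (int p + 1)" using J by (simp add: algebra_simps)
  have md: "(J - 1) mod (int p + 1) = int k - 1" unfolding J1 using k by simp
  have dv: "(J - 1) div (int p + 1) = int m" unfolding J1 using k by simp
  have "0 \<le> (int p + 1) * int m" by simp
  then have pos: "\<not> J \<le> 0" using J k by linarith
  have kk: "Suc (nat (int k - 1) + l) = k + l" for l using k by simp
  show ?thesis unfolding fseq_def using pos
    by (simp add: md dv kk Let_def wronskian_def[abs_def] Wm_def[abs_def])
qed

lemma gseq_shift:
  assumes "1 \<le> i" "1 \<le> p"
  shows "gseq p f (i + p) = deriv (gseq p f i)"
proof -
  have e: "i + p - 1 = (i - 1) + p" using assms by simp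
  have p0: "p \<noteq> 0" using assms by simp
  have a: "(i + p - 1) div p = Suc ((i - 1) div p)" "(i + p - 1) mod p = (i - 1) mod p"
    unfolding e using p0 by (simp_all add: div_add_self2)
  show ?thesis unfolding gseq_def a nderiv_Suc ..
qed

lemma gseq_smooth:
  assumes p: "1 \<le> p" and sm: "\<And>i. i \<in> {1..p} \<Longrightarrow> smooth (f i)"
  shows "nderiv i (gseq p f l) differentiable (at x)"
proof -
  have "(l - 1) mod p + 1 \<in> {1..p}" using p
    by (simp add: Suc_leI)
  then have "smooth (f ((l - 1) mod p + 1))" by (rule sm)
  then show ?thesis unfolding gseq_def nderiv_add smooth_def by blast
qed


theorem proposition4:
  fixes p :: nat and f :: "nat \<Rightarrow> real \<Rightarrow> real"
  assumes "p \<ge> 1"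
    and "\<And>i. i \<in> {1..p} \<Longrightarrow> smooth (f i)"
    and "(j::int) \<ge> 1"
  shows "fseq p f (j - 1) t * deriv (fseq p f j) t - deriv (fseq p f (j - 1)) t * fseq p f j t
         = fseq p f (j - p - 1) t * fseq p f (j + p) t"
proof -
  note p = assms(1) and sm = assms(2) and j = assms(3)
  have gs: "\<And>i l x. nderiv i (gseq p f l) differentiable (at x)"
    by (rule gseq_smooth[OF p sm])
  define q where "q = int p + 1"
  have q0: "q > 0" unfolding q_def by simp
  define k where "k = nat ((j - 1) mod q) + 1"
  define m where "m = nat ((j - 1) div q)"
  have "0 \<le> (j - 1) mod q" "(j - 1) mod q < q" using q0 by simp_all
  moreover have "0 \<le> (j - 1) div q" using j q0 by (simp add: pos_imp_zdiv_nonneg_iff)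
  moreover have "j - 1 = q * ((j - 1) div q) + (j - 1) mod q" by simp
  ultimately have jk: "j = int k + (int p + 1) * int m" and k1: "1 \<le> k" and kp: "k \<le> p + 1"
    unfolding k_def m_def q_def by (simp_all add: nat_le_iff)
  show ?thesis
  proof (cases "k \<ge> 2")
    case True
    define y where "y = (\<lambda>l. gseq p f (k - 1 + l))"
    have dy: "nderiv i (y l) differentiable (at x)" for i l x unfolding y_def by (rule gs)
    have ys: "(\<lambda>l. y (l+1)) = (\<lambda>l. gseq p f (k + l))" unfolding y_def using True
      by (intro ext, simp add: Suc_diff_le)
    have A: "fseq p f (j - 1) = Wm (m+1) y"
      using fseq_eq[of "j - 1" "k - 1" p m f] jk True kp unfolding y_def by (simp add: of_nat_diff)
    have B: "fseq p f j = Wm (m+1) (\<lambda>l. y (l+1))"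
      unfolding ys using fseq_eq[of j k p m f] jk k1 kp by simp
    have F: "fseq p f (j + p) = Wm (m+2) y"
      using fseq_eq[of "j + p" "k - 1" p "m+1" f] jk True kp unfolding y_def
      by (simp add: of_nat_diff algebra_simps)
    have H: "fseq p f (j - p - 1) t = Wm m (\<lambda>l. y (l+1)) t"
    proof (cases m)
      case 0
      then show ?thesis using jk kp by (simp add: fseq_le0 Wm_0)
    next
      case (Suc m')
      have "fseq p f (j - p - 1) = Wm (Suc m') (\<lambda>l. gseq p f (k + l))"
        using fseq_eq[of "j - p - 1" k p m' f] jk k1 kp Suc by (simp add: algebra_simps)
      then show ?thesis unfolding ys Suc by simp
    qed
    show ?thesis unfolding A B F H using Jacobi_front[OF dy, where n=m and t=t] by simp
  next
    case False
    then have k1': "k = 1" using k1 by simp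
    define y where "y = (\<lambda>l. if l = 0 then (\<lambda>_. 1) else gseq p f l)"
    have dy: "nderiv i (y l) differentiable (at x)" for i l x
      unfolding y_def using gs by (auto simp: nderiv_const)
    have ys: "(\<lambda>l. y (l+1)) = (\<lambda>l. gseq p f (1 + l))" unfolding y_def by auto
    have yd: "(\<lambda>l. deriv (y (Suc l))) = (\<lambda>l. gseq p f (p + 1 + l))"
      unfolding y_def using gseq_shift[OF _ p, of "1 + _" f] by (auto simp: algebra_simps)
    have cf: "Wm (Suc n) y = Wm n (\<lambda>l. gseq p f (p + 1 + l))" for n
      by (rule ext, subst Wm_const_front, simp add: y_def, simp add: yd)
    have B: "fseq p f j = Wm (m+1) (\<lambda>l. y (l+1))"
      unfolding ys using fseq_eq[of j 1 p m f] jk k1' by simp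
    have A: "fseq p f (j - 1) = Wm (m+1) y"
    proof (cases m)
      case 0
      then show ?thesis using jk k1' by (simp add: fseq_le0 cf Wm_0[abs_def])
    next
      case (Suc m')
      have "fseq p f (j - 1) = Wm (Suc m') (\<lambda>l. gseq p f (p + 1 + l))"
        using fseq_eq[of "j - 1" "p + 1" p m' f] jk k1' Suc by (simp add: algebra_simps)
      then show ?thesis using cf[of m] Suc by simp
    qed
    have F0: "fseq p f (j + p) = Wm (Suc m) (\<lambda>l. gseq p f (p + 1 + l))"
      using fseq_eq[of "j + p" "p + 1" p m f] jk k1' by (simp add: algebra_simps)
    have F: "fseq p f (j + p) = Wm (m+2) y"
      unfolding F0 using cf[of "Suc m"] by simp
    have H: "fseq p f (j - p - 1) t = Wm m (\<lambda>l. y (l+1)) t"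
    proof (cases m)
      case 0
      then show ?thesis using jk k1' by (simp add: fseq_le0 Wm_0)
    next
      case (Suc m')
      have "fseq p f (j - p - 1) = Wm (Suc m') (\<lambda>l. gseq p f (1 + l))"
        using fseq_eq[of "j - p - 1" 1 p m' f] jk k1' Suc by (simp add: algebra_simps)
      then show ?thesis unfolding ys Suc by simp
    qed
    show ?thesis unfolding A B F H using Jacobi_front[OF dy, where n=m and t=t] by simp
  qed
qed

end
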